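(* Suppose the shortest $s_0$-$s_1$ path $P_0$ in $G$ is unique. Then along every trajectory of the Physarum dynamics, for every vertex $v$ on $P_0$, $p_v(t)\to \operatorname{dist}(v,s_1)$ as $t\to\infty$, where $\operatorname{dist}(v,s_1)$ is the shortest-path distance (w.r.t. the lengths $L$) from $v$ to $s_1$ in $G$.
   Context: Let $G=(N,E)$ be a finite connected undirected graph with two distinct vertices $s_0$ (source) and $s_1$ (sink). Each edge $e$ has a fixed length $L_e>0$. Each edge has a time-dependent diameter $D_e(t)$ with $D_e(0)>0$, and resistance $R_e=L_e/D_e$. At each time $t$, the vertex potentials $p_v$ (normalized by $p_{s_1}=0$) are the solution of $\sum_{u\in\delta(v)}(p_v-p_u)/R_{uv}=b_v$ for all $v$, where $\delta(v)$ is the set of neighbours of $v$, $b_{s_0}=1$, $b_{s_1}=-1$, $b_v=0$ otherwise; for an edge $e=\{u,v\}$ with an arbitrarily fixed orientation $(u,v)$ the current is $Q_e=(p_u-p_v)/R_e=D_e(p_u-p_v)/L_e$. The diameters evolve by $\dot D_e(t)=|Q_e(t)|-D_e(t)$ for all $e\in E$ (the "Physarum dynamics"). *)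

theory Defs
  imports "HOL-Analysis.Analysis"
begin

definition simple_graph :: "'a set \<Rightarrow> 'a set set \<Rightarrow> bool" where
  "simple_graph N E \<longleftrightarrow> finite N \<and> E \<subseteq> {{u, v} | u v. u \<in> N \<and> v \<in> N \<and> u \<noteq> v}"

definition walk :: "'a set set \<Rightarrow> 'a list \<Rightarrow> bool" where
  "walk E xs \<longleftrightarrow> xs \<noteq> [] \<and> (\<forall>i. Suc i < length xs \<longrightarrow> {xs ! i, xs ! Suc i} \<in> E)"

definition connected_graph :: "'a set \<Rightarrow> 'a set set \<Rightarrow> bool" where
  "connected_graph N E \<longleftrightarrow>
     (\<forall>u\<in>N. \<forall>v\<in>N. \<exists>xs. walk E xs \<and> hd xs = u \<and> last xs = v)"

definition is_path :: "'a set set \<Rightarrow> 'a \<Rightarrow> 'a \<Rightarrow> 'a list \<Rightarrow> bool" where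
  "is_path E u v xs \<longleftrightarrow> walk E xs \<and> distinct xs \<and> hd xs = u \<and> last xs = v"

definition path_len :: "('a set \<Rightarrow> real) \<Rightarrow> 'a list \<Rightarrow> real" where
  "path_len L xs = (\<Sum>i<length xs - 1. L {xs ! i, xs ! Suc i})"

definition shortest_path :: "'a set set \<Rightarrow> ('a set \<Rightarrow> real) \<Rightarrow> 'a \<Rightarrow> 'a \<Rightarrow> 'a list \<Rightarrow> bool" where
  "shortest_path E L u v P \<longleftrightarrow> is_path E u v P \<and>
     (\<forall>Q. is_path E u v Q \<longrightarrow> path_len L P \<le> path_len L Q)"

definition dist_L :: "'a set set \<Rightarrow> ('a set \<Rightarrow> real) \<Rightarrow> 'a \<Rightarrow> 'a \<Rightarrow> real" where
  "dist_L E L u v = Min (path_len L ` {xs. is_path E u v xs})"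

definition nbrs :: "'a set set \<Rightarrow> 'a \<Rightarrow> 'a set" where
  "nbrs E v = {u. {u, v} \<in> E}"

definition supply_b :: "'a \<Rightarrow> 'a \<Rightarrow> 'a \<Rightarrow> real" where
  "supply_b s0 s1 v = (if v = s0 then 1 else if v = s1 then -1 else 0)"

text \<open>Physarum trajectory for t >= 0: D t e are the diameters, p t v the potentials
  (normalised p s1 = 0, solving the Kirchhoff system with R_e = L_e / D_e),
  and D evolves by D' = |Q| - D with |Q_e| = D_e |p_u - p_v| / L_e.\<close>
definition physarum_traj ::
  "'a set \<Rightarrow> 'a set set \<Rightarrow> ('a set \<Rightarrow> real) \<Rightarrow> 'a \<Rightarrow> 'a \<Rightarrow>
   (real \<Rightarrow> 'a set \<Rightarrow> real) \<Rightarrow> (real \<Rightarrow> 'a \<Rightarrow> real) \<Rightarrow> bool" where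
  "physarum_traj N E L s0 s1 D p \<longleftrightarrow>
     (\<forall>e\<in>E. D 0 e > 0) \<and>
     (\<forall>t\<ge>0. p t s1 = 0 \<and>
        (\<forall>v\<in>N. (\<Sum>u\<in>nbrs E v. (p t v - p t u) / (L {u, v} / D t {u, v})) = supply_b s0 s1 v) \<and>
        (\<forall>u v. {u, v} \<in> E \<longrightarrow>
           ((\<lambda>\<tau>. D \<tau> {u, v}) has_real_derivative
              (\<bar>D t {u, v} * (p t u - p t v) / L {u, v}\<bar> - D t {u, v})) (at t within {0..})))"

end

theory Submission
  imports Defs
begin

lemma deriv_mono_within:
  fixes h h' :: "real \<Rightarrow> real"
  assumes "0 \<le> T" "T \<le> t"
    and d: "\<And>s. s \<ge> T \<Longrightarrow> (h has_real_derivative h' s) (at s within {0..})"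
    and nn: "\<And>s. s \<ge> T \<Longrightarrow> h' s \<ge> 0"
  shows "h T \<le> h t"
proof (rule DERIV_nonneg_imp_increasing_open[OF assms(2)])
  fix x assume x: "T < x" "x < t"
  have sub: "{0<..} \<subseteq> {0::real..}" by auto
  have "(h has_real_derivative h' x) (at x within {0<..})"
    using has_field_derivative_subset[OF d[of x] sub] x by simp
  then have "(h has_real_derivative h' x) (at x)"
    using x assms(1) at_within_open[of x "{0<..}"] by simp
  then show "\<exists>y. (h has_real_derivative y) (at x) \<and> 0 \<le> y" using nn[of x] x by auto
next
  have "continuous_on {T..t} h"
    unfolding continuous_on_eq_continuous_within
  proof
    fix x :: real assume x: "x \<in> {T..t}"
    have "continuous (at x within {0..}) h"
      using DERIV_continuous[OF d[of x]] x by simp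
    then show "continuous (at x within {T..t}) h"
      by (rule continuous_within_subset) (use assms(1) in auto)
  qed
  then show "continuous_on {T..t} h" .
qed


lemma cmp_lower:
  fixes f f' :: "real \<Rightarrow> real"
  assumes T: "0 \<le> T" and t: "T \<le> t"
    and d: "\<And>s. s \<ge> T \<Longrightarrow> (f has_real_derivative f' s) (at s within {0..})"
    and ge: "\<And>s. s \<ge> T \<Longrightarrow> f' s \<ge> a - f s"
  shows "f t \<ge> a + (f T - a) * exp (-(t - T))"
proof -
  let ?h = "\<lambda>s. (f s - a) * exp s"
  have "?h T \<le> ?h t"
  proof (rule deriv_mono_within[OF T t])
    fix s assume s: "s \<ge> T"
    show "(?h has_real_derivative (f' s * exp s + (f s - a) * exp s)) (at s within {0..})"
      by (rule derivative_eq_intros d[OF s] refl | simp)+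
    show "f' s * exp s + (f s - a) * exp s \<ge> 0"
    proof -
      have "(f' s + (f s - a)) * exp s \<ge> 0" using ge[OF s] by simp
      then show ?thesis by (simp add: algebra_simps)
    qed
  qed
  then have "(f T - a) * exp T * exp (-t) \<le> (f t - a) * exp t * exp (-t)"
    by (simp add: mult_right_mono)
  then have "(f T - a) * exp (-(t - T)) \<le> f t - a"
    by (simp add: mult.assoc exp_add[symmetric] exp_diff)
  then show ?thesis by simp
qed

lemma cmp_upper:
  fixes f f' :: "real \<Rightarrow> real"
  assumes T: "0 \<le> T" and t: "T \<le> t"
    and d: "\<And>s. s \<ge> T \<Longrightarrow> (f has_real_derivative f' s) (at s within {0..})"
    and le: "\<And>s. s \<ge> T \<Longrightarrow> f' s \<le> a - f s"
  shows "f t \<le> a + (f T - a) * exp (-(t - T))"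
proof -
  have "- f t \<ge> (-a) + (- f T - (-a)) * exp (-(t - T))"
  proof (rule cmp_lower[OF T t, where f' = "\<lambda>s. - f' s"])
    fix s assume s: "s \<ge> T"
    show "((\<lambda>s. - f s) has_real_derivative - f' s) (at s within {0..})"
      using d[OF s] by (rule DERIV_minus)
    show "- f' s \<ge> - a - - f s" using le[OF s] by simp
  qed
  then show ?thesis by (simp add: algebra_simps)
qed

lemma ode_limit:
  fixes f g :: "real \<Rightarrow> real"
  assumes d: "\<And>s. s \<ge> 0 \<Longrightarrow> (f has_real_derivative (g s - f s)) (at s within {0..})"
    and g: "(g \<longlongrightarrow> l) at_top"
  shows "(f \<longlongrightarrow> l) at_top"
proof (rule tendstoI)
  fix e :: real assume e: "e > 0"
  have "\<forall>\<^sub>F s in at_top. dist (g s) l < e / 2" using tendstoD[OF g, of "e/2"] e by simp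
  then obtain T0 where T0: "\<And>s. s \<ge> T0 \<Longrightarrow> \<bar>g s - l\<bar> < e / 2"
    by (auto simp: eventually_at_top_linorder dist_real_def)
  define T where "T = max T0 0"
  have T: "T \<ge> 0" "T \<ge> T0" by (auto simp: T_def)
  define M where "M = \<bar>f T - l\<bar> + e"
  have M: "M > 0" using e by (simp add: M_def add_nonneg_pos)
  have "((\<lambda>t. M * exp T * exp (- t)) \<longlongrightarrow> M * exp T * 0) at_top"
    by (intro tendsto_intros filterlim_compose[OF exp_at_bot filterlim_uminus_at_bot_at_top])
  moreover have "(\<lambda>t. M * exp T * exp (- t)) = (\<lambda>t. M * exp (-(t - T)))"
    by (rule ext) (simp add: exp_diff exp_minus field_simps)
  ultimately have "((\<lambda>t. M * exp (-(t - T))) \<longlongrightarrow> 0) at_top" by simp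
  then have ev: "\<forall>\<^sub>F t in at_top. M * exp (-(t - T)) < e / 2"
    using order_tendstoD(2) e by (metis half_gt_zero)
  have "\<forall>\<^sub>F t in at_top. t \<ge> T" by (rule eventually_ge_at_top)
  then show "\<forall>\<^sub>F t in at_top. dist (f t) l < e"
  using ev proof eventually_elim
    case (elim t)
    have lo: "f t \<ge> (l - e/2) + (f T - (l - e/2)) * exp (-(t - T))"
    proof (rule cmp_lower[OF T(1) elim(1) d])
      fix s assume "s \<ge> T"
      then have "\<bar>g s - l\<bar> < e/2" using T0 T by auto
      then show "g s - f s \<ge> (l - e/2) - f s" by linarith
    qed (use T in auto)
    have up: "f t \<le> (l + e/2) + (f T - (l + e/2)) * exp (-(t - T))"
    proof (rule cmp_upper[OF T(1) elim(1) d])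
      fix s assume "s \<ge> T"
      then have "\<bar>g s - l\<bar> < e/2" using T0 T by auto
      then show "g s - f s \<le> (l + e/2) - f s" by linarith
    qed (use T in auto)
    have ex: "0 < exp (-(t - T))" "exp (-(t - T)) \<le> 1" using elim by auto
    have "\<bar>f T - (l - e/2)\<bar> \<le> M" "\<bar>f T - (l + e/2)\<bar> \<le> M" using e by (auto simp: M_def)
    then have "\<bar>(f T - (l - e/2)) * exp (-(t - T))\<bar> \<le> M * exp (-(t - T))"
      "\<bar>(f T - (l + e/2)) * exp (-(t - T))\<bar> \<le> M * exp (-(t - T))"
      using ex by (auto simp: abs_mult intro: mult_right_mono)
    then show ?case using lo up elim(2) by (auto simp: dist_real_def abs_less_iff)
  qed
qed

lemma mono_bdd_diff:
  fixes G :: "real \<Rightarrow> real"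
  assumes mono: "\<And>s t. 0 \<le> s \<Longrightarrow> s \<le> t \<Longrightarrow> G t \<le> G s"
    and bdd: "\<And>t. t \<ge> 0 \<Longrightarrow> G t \<ge> B"
    and e: "e > 0"
  shows "\<exists>T\<ge>0. \<forall>t\<ge>T. G t - G (t + 1) < e"
proof -
  define g where "g = Inf (G ` {0..})"
  have bd: "bdd_below (G ` {0..})" using bdd by (auto intro!: bdd_belowI)
  have ne: "G ` {0..} \<noteq> {}" by auto
  have "g < g + e" using e by simp
  then obtain y where y: "y \<in> G ` {0..}" "y < g + e"
    using cInf_lessD[OF ne, of "g + e"] unfolding g_def by auto
  then obtain T where T: "T \<ge> 0" "G T < g + e" by auto
  show ?thesis
  proof (intro exI[of _ T] conjI allI impI)
    fix t assume t: "t \<ge> T"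
    have "G (t+1) \<ge> g" unfolding g_def by (rule cInf_lower[OF _ bd]) (use T t in auto)
    moreover have "G t \<le> G T" using mono T t by auto
    ultimately show "G t - G (t + 1) < e" using T by linarith
  qed (use T in auto)
qed


lemma path_len_Cons:
  assumes "Q \<noteq> []"
  shows "path_len w (u # Q) = w {u, hd Q} + path_len w Q"
proof -
  obtain n where n: "length Q = Suc n" using assms by (cases Q) auto
  have "path_len w (u # Q) = (\<Sum>i<Suc n. w {(u#Q) ! i, (u#Q) ! Suc i})"
    unfolding path_len_def using n by simp
  also have "\<dots> = w {u, Q ! 0} + (\<Sum>i<n. w {Q ! i, Q ! Suc i})"
    by (subst sum.lessThan_Suc_shift) simp
  also have "\<dots> = w {u, hd Q} + path_len w Q"
    unfolding path_len_def using n assms by (simp add: hd_conv_nth)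
  finally show ?thesis .
qed

lemma path_len_drop:
  assumes nn: "\<And>i. Suc i < length Q \<Longrightarrow> w {Q ! i, Q ! Suc i} \<ge> 0"
  shows "path_len w (drop m Q) \<le> path_len w Q"
proof -
  have "path_len w (drop m Q) = (\<Sum>i<length Q - m - 1. w {Q ! (m + i), Q ! Suc (m + i)})"
    unfolding path_len_def by (intro sum.cong) auto
  also have "\<dots> = (\<Sum>j\<in>(\<lambda>i. m + i) ` {..<length Q - m - 1}. w {Q ! j, Q ! Suc j})"
    by (subst sum.reindex) (auto simp: inj_on_def)
  also have "\<dots> \<le> (\<Sum>j<length Q - 1. w {Q ! j, Q ! Suc j})"
    by (rule sum_mono2) (auto intro!: nn)
  finally show ?thesis unfolding path_len_def .
qed

locale phys =
  fixes N :: "'a set" and E :: "'a set set" and L :: "'a set \<Rightarrow> real"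
    and s0 s1 :: 'a and P0 :: "'a list"
    and D :: "real \<Rightarrow> 'a set \<Rightarrow> real" and p :: "real \<Rightarrow> 'a \<Rightarrow> real"
  assumes sg: "simple_graph N E" and s0N: "s0 \<in> N" and s1N: "s1 \<in> N" and s01: "s0 \<noteq> s1"
    and Lpos': "\<forall>e\<in>E. L e > 0"
    and sp: "shortest_path E L s0 s1 P0"
    and uniq: "\<forall>P. shortest_path E L s0 s1 P \<longrightarrow> P = P0"
    and traj: "physarum_traj N E L s0 s1 D p"
begin

lemma finN: "finite N" using sg by (simp add: simple_graph_def)

lemma edgeD: assumes "{u, v} \<in> E" shows "u \<in> N" "v \<in> N" "u \<noteq> v"
proof -
  from assms sg obtain a b where "{u,v} = {a,b}" "a \<in> N" "b \<in> N" "a \<noteq> b"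
    unfolding simple_graph_def by blast
  then show "u \<in> N" "v \<in> N" "u \<noteq> v" by (auto simp: doubleton_eq_iff)
qed

lemma Lpos: "{u, v} \<in> E \<Longrightarrow> L {u, v} > 0" using Lpos' by auto

lemma nbrs_sub: "nbrs E v \<subseteq> N" by (auto simp: nbrs_def dest: edgeD)
lemma fin_nbrs: "finite (nbrs E v)" using finite_subset[OF nbrs_sub finN] .

definition A :: "('a \<times> 'a) set" where "A = (SIGMA v:N. nbrs E v)"

lemma memA: "(v, u) \<in> A \<longleftrightarrow> {u, v} \<in> E"
  by (auto simp: A_def nbrs_def dest: edgeD)

lemma memA_swap: "(v, u) \<in> A \<longleftrightarrow> (u, v) \<in> A"
  by (simp add: memA insert_commute)

lemma finA: "finite A" unfolding A_def using finN fin_nbrs by auto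

lemma walk_set:
  assumes "walk E Q" "last Q \<in> N" shows "set Q \<subseteq> N"
proof
  fix x assume "x \<in> set Q"
  then obtain i where i: "i < length Q" "Q ! i = x" by (auto simp: in_set_conv_nth)
  show "x \<in> N"
  proof (cases "Suc i < length Q")
    case True
    then have "{Q ! i, Q ! Suc i} \<in> E" using assms by (auto simp: walk_def)
    then show ?thesis using edgeD i by auto
  next
    case False
    then have "i = length Q - 1" using i by auto
    then show ?thesis using assms i by (auto simp: walk_def last_conv_nth)
  qed
qed

lemma fin_paths: assumes "w \<in> N" shows "finite {Q. is_path E v w Q}"
proof (rule finite_subset[OF _ finite_subset_distinct[OF finN]])
  show "{Q. is_path E v w Q} \<subseteq> {xs. set xs \<subseteq> N \<and> distinct xs}"
    using walk_set assms by (auto simp: is_path_def)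
qed

end

lemma path_drop:
  assumes "is_path E x y Q" "m < length Q"
  shows "is_path E (Q ! m) y (drop m Q)"
  using assms unfolding is_path_def walk_def
  by (auto simp: hd_drop_conv_nth last_drop)

lemma path_cons:
  assumes "is_path E v y Q" "{u, v} \<in> E" "u \<notin> set Q"
  shows "is_path E u y (u # Q)"
proof -
  have Q: "Q \<noteq> []" "hd Q = v" "walk E Q" "distinct Q" "last Q = y"
    using assms unfolding is_path_def walk_def by auto
  have "walk E (u # Q)"
    unfolding walk_def
  proof (intro conjI allI impI)
    fix i assume i: "Suc i < length (u # Q)"
    show "{(u # Q) ! i, (u # Q) ! Suc i} \<in> E"
    proof (cases i)
      case 0 then show ?thesis using Q assms(2) by (simp add: hd_conv_nth[symmetric])
    next
      case (Suc j) then show ?thesis using Q i by (auto simp: walk_def)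
    qed
  qed simp
  then show ?thesis using Q assms(3) unfolding is_path_def by auto
qed

context phys begin

lemma dist_le:
  assumes "is_path E x s1 Q"
  shows "dist_L E w x s1 \<le> path_len w Q"
  unfolding dist_L_def using assms fin_paths[OF s1N] by (intro Min_le) auto

lemma dist_attained:
  assumes "{Q. is_path E x s1 Q} \<noteq> {}"
  shows "\<exists>Q. is_path E x s1 Q \<and> path_len w Q = dist_L E w x s1"
proof -
  have "dist_L E w x s1 \<in> path_len w ` {Q. is_path E x s1 Q}"
    unfolding dist_L_def using assms fin_paths[OF s1N] by (intro Min_in) auto
  then show ?thesis by auto
qed

lemma path_transfer:
  assumes "{u, v} \<in> E" "is_path E v s1 Q"
  shows "\<exists>R. is_path E u s1 R"
proof (cases "u \<in> set Q")
  case True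
  then obtain m where m: "m < length Q" "Q ! m = u" by (auto simp: in_set_conv_nth)
  show ?thesis using path_drop[OF assms(2) m(1)] m by auto
next
  case False
  show ?thesis using path_cons[OF assms(2) assms(1) False] by auto
qed

lemma dist_Lip:
  assumes wnn: "\<forall>e\<in>E. w e \<ge> 0" and e: "{u, v} \<in> E"
  shows "dist_L E w u s1 \<le> w {u, v} + dist_L E w v s1"
proof (cases "{Q. is_path E v s1 Q} = {}")
  case True
  have "{Q. is_path E u s1 Q} = {}"
  proof (rule ccontr)
    assume "{Q. is_path E u s1 Q} \<noteq> {}"
    then obtain R where "is_path E u s1 R" by auto
    from path_transfer[OF _ this, of v] e True show False by (auto simp: insert_commute)
  qed
  then have "dist_L E w u s1 = dist_L E w v s1" using True by (simp add: dist_L_def)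
  then show ?thesis using wnn e by auto
next
  case False
  then obtain Q where Q: "is_path E v s1 Q" "path_len w Q = dist_L E w v s1"
    using dist_attained by blast
  have nnQ: "\<And>i. Suc i < length Q \<Longrightarrow> w {Q ! i, Q ! Suc i} \<ge> 0"
    using Q(1) wnn by (auto simp: is_path_def walk_def)
  show ?thesis
  proof (cases "u \<in> set Q")
    case True
    then obtain m where m: "m < length Q" "Q ! m = u" by (auto simp: in_set_conv_nth)
    have "dist_L E w u s1 \<le> path_len w (drop m Q)"
      using dist_le path_drop[OF Q(1) m(1)] m by auto
    also have "\<dots> \<le> path_len w Q" using nnQ by (rule path_len_drop)
    finally show ?thesis using Q wnn e by auto
  next
    case False
    have "dist_L E w u s1 \<le> path_len w (u # Q)"
      using dist_le path_cons[OF Q(1) e False] by auto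
    also have "\<dots> = w {u, hd Q} + path_len w Q"
      by (rule path_len_Cons) (use Q in \<open>auto simp: is_path_def walk_def\<close>)
    finally show ?thesis using Q by (auto simp: is_path_def)
  qed
qed

end

context phys begin

definition kk :: nat where "kk = length P0 - 1"
definition ed :: "nat \<Rightarrow> 'a set" where "ed i = {P0 ! i, P0 ! Suc i}"
definition Le :: "nat \<Rightarrow> real" where "Le i = L (ed i)"
definition Lstar :: real where "Lstar = path_len L P0"
definition PE :: "'a set set" where "PE = ed ` {..<kk}"

lemma P0_path: "is_path E s0 s1 P0" using sp by (simp add: shortest_path_def)

lemma P0_facts: "P0 \<noteq> []" "distinct P0" "length P0 = Suc kk" "P0 ! 0 = s0" "P0 ! kk = s1"
  using P0_path by (auto simp: is_path_def walk_def kk_def hd_conv_nth last_conv_nth)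

lemma kk_pos: "kk \<ge> 1"
proof (rule ccontr)
  assume "\<not> kk \<ge> 1" then have "kk = 0" by simp
  then show False using P0_facts s01 by auto
qed

lemma ed_E: "i < kk \<Longrightarrow> ed i \<in> E"
  using P0_path P0_facts by (auto simp: is_path_def walk_def ed_def)

lemma Le_pos: "i < kk \<Longrightarrow> Le i > 0"
  using ed_E Lpos' by (auto simp: Le_def)

lemma Lstar_sum: "Lstar = (\<Sum>i<kk. Le i)"
  by (simp add: Lstar_def path_len_def kk_def Le_def ed_def)

lemma Lstar_pos: "Lstar > 0"
  unfolding Lstar_sum using kk_pos Le_pos by (intro sum_pos) (auto simp: lessThan_empty_iff)

lemma shortest_le: "is_path E s0 s1 Q \<Longrightarrow> Lstar \<le> path_len L Q"
  using sp by (auto simp: shortest_path_def Lstar_def)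

lemma path_len_P0_drop:
  assumes "j \<le> kk"
  shows "path_len w (drop j P0) = (\<Sum>i\<in>{j..<kk}. w (ed i))"
proof -
  have "path_len w (drop j P0) = (\<Sum>i<kk - j. w (ed (j + i)))"
    unfolding path_len_def ed_def using P0_facts assms by (intro sum.cong) auto
  also have "\<dots> = (\<Sum>i\<in>(\<lambda>i. j + i) ` {..<kk - j}. w (ed i))"
    by (subst sum.reindex) (auto simp: inj_on_def)
  also have "(\<lambda>i. j + i) ` {..<kk - j} = {j..<kk}"
    proof (intro set_eqI iffI)
    fix x assume "x \<in> {j..<kk}"
    then show "x \<in> (\<lambda>i. j + i) ` {..<kk - j}" by (intro image_eqI[of _ _ "x - j"]) auto
  qed auto
  finally show ?thesis .
qed

lemma dist_s0: "dist_L E L s0 s1 = Lstar"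
proof (rule antisym)
  show "dist_L E L s0 s1 \<le> Lstar" using dist_le[OF P0_path] by (simp add: Lstar_def)
  obtain Q where "is_path E s0 s1 Q" "path_len L Q = dist_L E L s0 s1"
    using dist_attained[of s0 L] P0_path by blast
  then show "Lstar \<le> dist_L E L s0 s1" using shortest_le by metis
qed

lemma dist_prefix:
  "j \<le> kk \<Longrightarrow> dist_L E L s0 s1 \<le> (\<Sum>i<j. Le i) + dist_L E L (P0 ! j) s1"
proof (induction j)
  case 0 then show ?case using P0_facts by simp
next
  case (Suc j)
  have "dist_L E L (P0 ! j) s1 \<le> L (ed j) + dist_L E L (P0 ! Suc j) s1"
    using dist_Lip[of L "P0 ! j" "P0 ! Suc j"] Lpos' ed_E[of j] Suc.prems
    by (auto simp: ed_def less_imp_le)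
  then show ?case using Suc by (simp add: Le_def)
qed

lemma dist_P0:
  assumes "j \<le> kk"
  shows "dist_L E L (P0 ! j) s1 = (\<Sum>i\<in>{j..<kk}. Le i)"
proof (rule antisym)
  have jl: "j < length P0" using assms P0_facts by simp
  have "is_path E (P0 ! j) s1 (drop j P0)" using path_drop[OF P0_path jl] .
  from dist_le[OF this] show "dist_L E L (P0 ! j) s1 \<le> (\<Sum>i\<in>{j..<kk}. Le i)"
    using path_len_P0_drop[OF assms] by (simp add: Le_def)
  have "(\<Sum>i<kk. Le i) = (\<Sum>i<j. Le i) + (\<Sum>i\<in>{j..<kk}. Le i)"
    using sum.atLeastLessThan_concat[of 0 j kk Le] assms by (simp add: atLeast0LessThan)
  then show "(\<Sum>i\<in>{j..<kk}. Le i) \<le> dist_L E L (P0 ! j) s1"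
    using dist_prefix[OF assms] dist_s0 Lstar_sum by linarith
qed

end

context phys begin

definition PS where "PS = {Q. is_path E s0 s1 Q \<and> Q \<noteq> P0}"
definition eps :: real where
  "eps = (if PS = {} then 1/2 else min (1/2) (Min ((\<lambda>Q. 1 - Lstar / path_len L Q) ` PS)))"
definition Lp :: "'a set \<Rightarrow> real" where
  "Lp e = (if e \<in> PE then L e else (1 - eps) * L e)"

lemma PS_long: "Q \<in> PS \<Longrightarrow> path_len L Q > Lstar"
proof (rule ccontr)
  assume Q: "Q \<in> PS" "\<not> Lstar < path_len L Q"
  have "shortest_path E L s0 s1 Q"
    unfolding shortest_path_def using Q shortest_le by (force simp: PS_def)
  then show False using uniq Q by (auto simp: PS_def)
qed

lemma finPS: "finite PS" unfolding PS_def
  by (rule finite_subset[OF _ fin_paths[OF s1N]]) auto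

lemma eps_pos: "eps > 0" and eps_le: "eps \<le> 1/2"
  and eps_gap: "Q \<in> PS \<Longrightarrow> (1 - eps) * path_len L Q \<ge> Lstar"
proof -
  have pos: "\<And>Q. Q \<in> PS \<Longrightarrow> 1 - Lstar / path_len L Q > 0"
  proof -
    fix Q assume "Q \<in> PS"
    with PS_long Lstar_pos have "path_len L Q > Lstar" "Lstar > 0" by auto
    then show "1 - Lstar / path_len L Q > 0" by (simp add: field_simps)
  qed
  show "eps > 0"
  proof (cases "PS = {}")
    case False
    then have "Min ((\<lambda>Q. 1 - Lstar / path_len L Q) ` PS) > 0"
      using finPS pos by (subst Min_gr_iff) auto
    then show ?thesis using False by (simp add: eps_def)
  qed (simp add: eps_def)
  show "eps \<le> 1/2" unfolding eps_def using min.cobounded1 by (auto simp del: min_less_iff_conj)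
  assume Q: "Q \<in> PS"
  then have "eps \<le> 1 - Lstar / path_len L Q"
    unfolding eps_def using finPS by (auto intro!: min.coboundedI2 Min_le)
  moreover have "path_len L Q > 0" using PS_long[OF Q] Lstar_pos by simp
  ultimately have "(1 - eps) * path_len L Q \<ge> (Lstar / path_len L Q) * path_len L Q"
    by (intro mult_right_mono) auto
  then show "(1 - eps) * path_len L Q \<ge> Lstar" using \<open>path_len L Q > 0\<close> by simp
qed

lemma Lp_nn: "\<forall>e\<in>E. Lp e \<ge> 0"
  using Lpos' eps_le by (auto simp: Lp_def less_imp_le)

lemma Lp_ge: "e \<in> E \<Longrightarrow> Lp e \<ge> (1 - eps) * L e"
  using Lpos'[rule_format, of e] eps_pos by (auto simp: Lp_def mult_le_cancel_right1 less_imp_le)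

definition dd :: "'a \<Rightarrow> real" where "dd v = dist_L E Lp v s1"

lemma dd_Lip: "{u, v} \<in> E \<Longrightarrow> dd u \<le> Lp {u, v} + dd v"
  unfolding dd_def by (rule dist_Lip[OF Lp_nn])

lemma dd_s1: "dd s1 \<le> 0"
proof -
  have "is_path E s1 s1 [s1]" by (simp add: is_path_def walk_def)
  from dist_le[OF this, of Lp] show ?thesis by (simp add: dd_def path_len_def)
qed

lemma dd_s0: "dd s0 \<ge> Lstar"
proof -
  obtain Q where Q: "is_path E s0 s1 Q" "path_len Lp Q = dd s0"
    using dist_attained[of s0 Lp] P0_path unfolding dd_def by blast
  show ?thesis
  proof (cases "Q = P0")
    case True
    have "path_len Lp P0 = path_len L P0"
      unfolding path_len_def using P0_facts
      by (intro sum.cong) (auto simp: Lp_def PE_def ed_def kk_def)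
    then show ?thesis using True Q by (simp add: Lstar_def)
  next
    case False
    then have "Q \<in> PS" using Q by (simp add: PS_def)
    have "(1 - eps) * path_len L Q \<le> path_len Lp Q"
      unfolding path_len_def sum_distrib_left
      using Q(1) by (intro sum_mono Lp_ge) (auto simp: is_path_def walk_def)
    then show ?thesis using eps_gap[OF \<open>Q \<in> PS\<close>] Q by simp
  qed
qed

end

context phys begin

definition cc :: "real \<Rightarrow> 'a \<Rightarrow> 'a \<Rightarrow> real" where "cc t v u = D t {u, v} / L {u, v}"

lemma cc_sym: "cc t u v = cc t v u" by (simp add: cc_def insert_commute)

lemma sumA_swap: "(\<Sum>(v, u)\<in>A. f v u) = (\<Sum>(v, u)\<in>A. f u v)"
  by (rule sum.reindex_bij_witness[of _ prod.swap prod.swap]) (auto simp: memA_swap)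

lemma kirch: assumes "t \<ge> 0" "v \<in> N"
  shows "(\<Sum>u\<in>nbrs E v. cc t v u * (p t v - p t u)) = supply_b s0 s1 v"
proof -
  have "(\<Sum>u\<in>nbrs E v. (p t v - p t u) / (L {u, v} / D t {u, v})) = supply_b s0 s1 v"
    using traj assms unfolding physarum_traj_def by blast
  then show ?thesis by (simp add: cc_def algebra_simps)
qed

lemma p_s1: "t \<ge> 0 \<Longrightarrow> p t s1 = 0"
  using traj unfolding physarum_traj_def by blast

lemma E1: assumes "t \<ge> 0"
  shows "(\<Sum>(v, u)\<in>A. \<phi> v * (cc t v u * (p t v - p t u))) = \<phi> s0 - \<phi> s1"
proof -
  have "(\<Sum>(v, u)\<in>A. \<phi> v * (cc t v u * (p t v - p t u)))
      = (\<Sum>v\<in>N. \<Sum>u\<in>nbrs E v. \<phi> v * (cc t v u * (p t v - p t u)))"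
    unfolding A_def by (rule sum.Sigma[symmetric]) (use finN fin_nbrs in auto)
  also have "\<dots> = (\<Sum>v\<in>N. \<phi> v * supply_b s0 s1 v)"
    by (intro sum.cong refl) (simp add: sum_distrib_left[symmetric] kirch[OF assms])
  also have "\<dots> = (\<Sum>v\<in>N. (if v = s0 then \<phi> s0 else 0) + (if v = s1 then - \<phi> s1 else 0))"
    by (intro sum.cong refl) (use s01 in \<open>auto simp: supply_b_def\<close>)
  also have "\<dots> = \<phi> s0 - \<phi> s1"
    by (simp add: sum.distrib s0N s1N finN sum.delta)
  finally show ?thesis .
qed

lemma E1': assumes "t \<ge> 0"
  shows "(\<Sum>(v, u)\<in>A. (\<phi> v - \<phi> u) * cc t v u * (p t v - p t u)) = 2 * (\<phi> s0 - \<phi> s1)"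
proof -
  have "(\<Sum>(v, u)\<in>A. \<phi> u * (cc t v u * (p t v - p t u)))
      = (\<Sum>(v, u)\<in>A. \<phi> v * (cc t u v * (p t u - p t v)))"
    by (rule sumA_swap)
  also have "\<dots> = - (\<Sum>(v, u)\<in>A. \<phi> v * (cc t v u * (p t v - p t u)))"
    by (simp add: sum_negf[symmetric] cc_sym algebra_simps case_prod_unfold)
  finally have sw: "(\<Sum>(v, u)\<in>A. \<phi> u * (cc t v u * (p t v - p t u))) = - (\<phi> s0 - \<phi> s1)"
    using E1[OF assms] by simp
  have "(\<Sum>(v, u)\<in>A. (\<phi> v - \<phi> u) * cc t v u * (p t v - p t u))
      = (\<Sum>(v, u)\<in>A. \<phi> v * (cc t v u * (p t v - p t u))) - (\<Sum>(v, u)\<in>A. \<phi> u * (cc t v u * (p t v - p t u)))"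
    by (simp add: sum_subtractf[symmetric] algebra_simps case_prod_unfold)
  then show ?thesis using sw E1[OF assms] by simp
qed

end

context phys begin

lemma Dderiv: assumes "{u, v} \<in> E" "t \<ge> 0"
  shows "((\<lambda>\<tau>. D \<tau> {u, v}) has_real_derivative
           (\<bar>D t {u, v} * (p t u - p t v) / L {u, v}\<bar> - D t {u, v})) (at t within {0..})"
  using traj assms unfolding physarum_traj_def by blast

lemma Dpos_uv: assumes e: "{u, v} \<in> E" and t: "t \<ge> 0" shows "D t {u, v} > 0"
proof -
  have "D t {u, v} \<ge> 0 + (D 0 {u, v} - 0) * exp (- (t - 0))"
  proof (rule cmp_lower[where f = "\<lambda>\<tau>. D \<tau> {u, v}"])
    fix s :: real assume "s \<ge> 0"
    show "((\<lambda>\<tau>. D \<tau> {u, v}) has_real_derivative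
           (\<bar>D s {u, v} * (p s u - p s v) / L {u, v}\<bar> - D s {u, v})) (at s within {0..})"
      using Dderiv[OF e \<open>s \<ge> 0\<close>] .
  qed (use t in auto)
  moreover have "D 0 {u, v} > 0" using traj e unfolding physarum_traj_def by blast
  ultimately show ?thesis by (smt (verit) exp_gt_zero mult_pos_pos)
qed

lemma Dpos: assumes "e \<in> E" "t \<ge> 0" shows "D t e > 0"
proof -
  from assms sg obtain a b where "e = {a,b}" unfolding simple_graph_def by blast
  then show ?thesis using Dpos_uv assms by blast
qed

lemma ccpos: "(v, u) \<in> A \<Longrightarrow> t \<ge> 0 \<Longrightarrow> cc t v u > 0"
  using Dpos Lpos by (auto simp: cc_def memA)

definition fwd where "fwd i = (P0 ! i, P0 ! Suc i)"
definition bwd where "bwd i = (P0 ! Suc i, P0 ! i)"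
definition AP where "AP = {(v, u) \<in> A. {u, v} \<in> PE}"
definition AO where "AO = {(v, u) \<in> A. {u, v} \<notin> PE}"

lemma nth_P0_inj: "i \<le> kk \<Longrightarrow> j \<le> kk \<Longrightarrow> P0 ! i = P0 ! j \<longleftrightarrow> i = j"
  using P0_facts by (simp add: nth_eq_iff_index_eq)

lemma AP_eq: "AP = fwd ` {..<kk} \<union> bwd ` {..<kk}"
proof (intro set_eqI iffI)
  fix x assume "x \<in> AP"
  then obtain v u i where x: "x = (v, u)" "i < kk" "{u, v} = ed i"
    by (auto simp: AP_def PE_def)
  then show "x \<in> fwd ` {..<kk} \<union> bwd ` {..<kk}"
    by (auto simp: ed_def doubleton_eq_iff fwd_def bwd_def)
next
  fix x assume "x \<in> fwd ` {..<kk} \<union> bwd ` {..<kk}"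
  then show "x \<in> AP"
    using ed_E by (auto simp: AP_def PE_def fwd_def bwd_def memA ed_def insert_commute)
qed

lemma sum_AP: "(\<Sum>x\<in>AP. f x) = (\<Sum>i<kk. f (fwd i)) + (\<Sum>i<kk. f (bwd i))"
proof -
  have inj1: "inj_on fwd {..<kk}" and inj2: "inj_on bwd {..<kk}"
    using nth_P0_inj by (auto simp: inj_on_def fwd_def bwd_def)
  have disj: "fwd ` {..<kk} \<inter> bwd ` {..<kk} = {}"
  proof (rule ccontr)
    assume "fwd ` {..<kk} \<inter> bwd ` {..<kk} \<noteq> {}"
    then obtain i j where "i < kk" "j < kk" "P0 ! i = P0 ! Suc j" "P0 ! Suc i = P0 ! j"
      by (auto simp: fwd_def bwd_def)
    then have "i = Suc j" "Suc i = j" using nth_P0_inj[of i "Suc j"] nth_P0_inj[of "Suc i" j] by auto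
    then show False by simp
  qed
  show ?thesis unfolding AP_eq
    by (subst sum.union_disjoint) (use disj inj1 inj2 in \<open>auto simp: sum.reindex\<close>)
qed

lemma finAP: "finite AP" and finAO: "finite AO"
  using finA unfolding AP_def AO_def by (auto intro: finite_subset[OF _ finA])

lemma sum_A_split: "(\<Sum>x\<in>A. f x) = (\<Sum>x\<in>AP. f x) + (\<Sum>x\<in>AO. f x)"
proof -
  have "A = AP \<union> AO" "AP \<inter> AO = {}" by (auto simp: AP_def AO_def)
  then show ?thesis using sum.union_disjoint[OF finAP finAO] by simp
qed

lemma fwd_A: "i < kk \<Longrightarrow> fwd i \<in> A" and bwd_A: "i < kk \<Longrightarrow> bwd i \<in> A"
  using ed_E by (auto simp: fwd_def bwd_def memA ed_def insert_commute)

end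

context phys begin

definition Dl :: "real \<Rightarrow> real" where "Dl t = p t s0"
definition V :: "real \<Rightarrow> real" where "V t = (\<Sum>(v, u)\<in>A. L {u, v} * D t {u, v})"
definition S :: "real \<Rightarrow> real" where "S t = (\<Sum>(v, u)\<in>A. D t {u, v} * \<bar>p t v - p t u\<bar>)"
definition VO :: "real \<Rightarrow> real" where "VO t = (\<Sum>(v, u)\<in>AO. L {u, v} * D t {u, v})"
definition SO :: "real \<Rightarrow> real" where "SO t = (\<Sum>(v, u)\<in>AO. D t {u, v} * \<bar>p t v - p t u\<bar>)"
definition xi :: "real \<Rightarrow> nat \<Rightarrow> real" where "xi t i = D t (ed i)"
definition dp :: "real \<Rightarrow> nat \<Rightarrow> real" where "dp t i = p t (P0 ! i) - p t (P0 ! Suc i)"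
definition T :: "real \<Rightarrow> real" where "T t = (\<Sum>i<kk. \<bar>dp t i\<bar>)"

lemma xi_pos: "t \<ge> 0 \<Longrightarrow> i < kk \<Longrightarrow> xi t i > 0"
  using Dpos ed_E by (auto simp: xi_def)

lemma I1: assumes "t \<ge> 0"
  shows "(\<Sum>(v, u)\<in>A. cc t v u * (p t v - p t u)\<^sup>2) = 2 * Dl t"
  using E1'[OF assms, of "p t"] p_s1[OF assms]
  by (simp add: Dl_def power2_eq_square algebra_simps case_prod_unfold)

lemma Dl_nn: assumes "t \<ge> 0" shows "Dl t \<ge> 0"
proof -
  have "(\<Sum>(v, u)\<in>A. cc t v u * (p t v - p t u)\<^sup>2) \<ge> 0"
    using ccpos[OF _ assms] by (intro sum_nonneg) (auto simp: less_imp_le)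
  then show ?thesis using I1[OF assms] by simp
qed

lemma S_nn: "t \<ge> 0 \<Longrightarrow> S t \<ge> 0" and SO_nn: "t \<ge> 0 \<Longrightarrow> SO t \<ge> 0"
  and VO_nn: "t \<ge> 0 \<Longrightarrow> VO t \<ge> 0" and V_nn: "t \<ge> 0 \<Longrightarrow> V t \<ge> 0"
  unfolding S_def SO_def VO_def V_def
  using Dpos Lpos by (auto intro!: sum_nonneg simp: memA AO_def less_imp_le)

lemma I2: assumes t: "t \<ge> 0" shows "(S t)\<^sup>2 \<le> 2 * V t * Dl t"
proof -
  let ?a = "\<lambda>(v, u). sqrt (L {u, v} * D t {u, v})"
  let ?b = "\<lambda>(v, u). sqrt (D t {u, v} / L {u, v}) * \<bar>p t v - p t u\<bar>"
  have ab: "\<And>x. x \<in> A \<Longrightarrow> ?a x * ?b x = (case x of (v, u) \<Rightarrow> D t {u, v} * \<bar>p t v - p t u\<bar>)"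
  proof -
    fix x assume x: "x \<in> A"
    obtain v u where vu: "x = (v, u)" by (cases x)
    have pos: "L {u, v} > 0" "D t {u, v} > 0" using x vu Lpos Dpos t by (auto simp: memA)
    have "sqrt (L {u, v} * D t {u, v}) * sqrt (D t {u, v} / L {u, v}) = sqrt ((D t {u, v})\<^sup>2)"
      by (subst real_sqrt_mult[symmetric]) (use pos in \<open>simp add: power2_eq_square\<close>)
    also have "\<dots> = D t {u, v}" using pos by simp
    finally show "?a x * ?b x = (case x of (v, u) \<Rightarrow> D t {u, v} * \<bar>p t v - p t u\<bar>)"
      using vu by (simp add: mult.assoc[symmetric])
  qed
  have a2: "\<And>x. x \<in> A \<Longrightarrow> (?a x)\<^sup>2 = (case x of (v, u) \<Rightarrow> L {u, v} * D t {u, v})"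
    using Lpos Dpos t by (auto simp: memA less_imp_le)
  have b2: "\<And>x. x \<in> A \<Longrightarrow> (?b x)\<^sup>2 = (case x of (v, u) \<Rightarrow> cc t v u * (p t v - p t u)\<^sup>2)"
    using Lpos Dpos t by (auto simp: memA less_imp_le power_mult_distrib cc_def)
  have "(S t)\<^sup>2 = (\<Sum>x\<in>A. ?a x * ?b x)\<^sup>2" unfolding S_def using ab by (intro arg_cong[where f="\<lambda>y. y\<^sup>2"] sum.cong) auto
  also have "\<dots> \<le> (\<Sum>x\<in>A. (?a x)\<^sup>2) * (\<Sum>x\<in>A. (?b x)\<^sup>2)" by (rule Cauchy_Schwarz_ineq_sum)
  also have "(\<Sum>x\<in>A. (?a x)\<^sup>2) = V t" unfolding V_def using a2 by (rule sum.cong[OF refl])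
  also have "(\<Sum>x\<in>A. (?b x)\<^sup>2) = 2 * Dl t" unfolding I1[OF t, symmetric] using b2 by (rule sum.cong[OF refl])
  finally show ?thesis by simp
qed

lemma I3: assumes t: "t \<ge> 0" shows "S t \<ge> 2 * Lstar + eps * SO t"
proof -
  have "2 * Lstar \<le> 2 * (dd s0 - dd s1)" using dd_s0 dd_s1 by simp
  also have "\<dots> = (\<Sum>(v, u)\<in>A. (dd v - dd u) * cc t v u * (p t v - p t u))" by (rule E1'[OF t, symmetric])
  also have "\<dots> \<le> (\<Sum>(v, u)\<in>A. (Lp {u, v} / L {u, v}) * (D t {u, v} * \<bar>p t v - p t u\<bar>))"
  proof (rule sum_mono)
    fix x assume x: "x \<in> A"
    obtain v u where vu: "x = (v, u)" by (cases x)
    have e: "{u, v} \<in> E" "{v, u} \<in> E" using x vu by (auto simp: memA insert_commute)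
    have pos: "L {u, v} > 0" "D t {u, v} > 0" using e Lpos Dpos t by auto
    have "\<bar>dd v - dd u\<bar> \<le> Lp {u, v}" using dd_Lip[OF e(1)] dd_Lip[OF e(2)] by (auto simp: insert_commute)
    then have h: "\<bar>dd v - dd u\<bar> * \<bar>cc t v u * (p t v - p t u)\<bar> \<le> Lp {u, v} * \<bar>cc t v u * (p t v - p t u)\<bar>"
      by (rule mult_right_mono) simp
    have "(dd v - dd u) * (cc t v u * (p t v - p t u)) \<le> \<bar>(dd v - dd u) * (cc t v u * (p t v - p t u))\<bar>"
      by (rule abs_ge_self)
    also have "\<dots> = \<bar>dd v - dd u\<bar> * \<bar>cc t v u * (p t v - p t u)\<bar>" by (rule abs_mult)
    also note h
    also have "\<bar>cc t v u * (p t v - p t u)\<bar> = D t {u, v} / L {u, v} * \<bar>p t v - p t u\<bar>"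
      using pos by (simp add: cc_def abs_mult)
    finally show "(case x of (v, u) \<Rightarrow> (dd v - dd u) * cc t v u * (p t v - p t u))
      \<le> (case x of (v, u) \<Rightarrow> (Lp {u, v} / L {u, v}) * (D t {u, v} * \<bar>p t v - p t u\<bar>))"
      using vu by (simp add: mult.assoc)
  qed
  also have "\<dots> = (\<Sum>x\<in>AP. case x of (v, u) \<Rightarrow> (Lp {u, v} / L {u, v}) * (D t {u, v} * \<bar>p t v - p t u\<bar>))
      + (\<Sum>x\<in>AO. case x of (v, u) \<Rightarrow> (Lp {u, v} / L {u, v}) * (D t {u, v} * \<bar>p t v - p t u\<bar>))"
    by (rule sum_A_split)
  also have "(\<Sum>x\<in>AP. case x of (v, u) \<Rightarrow> (Lp {u, v} / L {u, v}) * (D t {u, v} * \<bar>p t v - p t u\<bar>))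
      = (\<Sum>(v, u)\<in>AP. D t {u, v} * \<bar>p t v - p t u\<bar>)"
  proof (intro sum.cong refl)
    fix x assume x: "x \<in> AP"
    obtain v u where vu: "x = (v, u)" by (cases x)
    have "{u, v} \<in> PE" "{u, v} \<in> E" using x unfolding vu AP_def by (auto simp: memA)
    then have r: "Lp {u, v} / L {u, v} = 1" using Lpos[of u v] by (simp add: Lp_def)
    show "(case x of (v, u) \<Rightarrow> (Lp {u, v} / L {u, v}) * (D t {u, v} * \<bar>p t v - p t u\<bar>))
      = (case x of (v, u) \<Rightarrow> D t {u, v} * \<bar>p t v - p t u\<bar>)" unfolding vu prod.case r by simp
  qed
  also have "(\<Sum>x\<in>AO. case x of (v, u) \<Rightarrow> (Lp {u, v} / L {u, v}) * (D t {u, v} * \<bar>p t v - p t u\<bar>))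
      = (1 - eps) * SO t"
    unfolding SO_def sum_distrib_left
  proof (intro sum.cong refl)
    fix x assume x: "x \<in> AO"
    obtain v u where vu: "x = (v, u)" by (cases x)
    have "{u, v} \<notin> PE" "{u, v} \<in> E" using x unfolding vu AO_def by (auto simp: memA)
    then have r: "Lp {u, v} / L {u, v} = 1 - eps" using Lpos[of u v] by (simp add: Lp_def)
    show "(case x of (v, u) \<Rightarrow> (Lp {u, v} / L {u, v}) * (D t {u, v} * \<bar>p t v - p t u\<bar>))
      = (1 - eps) * (case x of (v, u) \<Rightarrow> D t {u, v} * \<bar>p t v - p t u\<bar>)" unfolding vu prod.case r by (rule refl)
  qed
  also have "(\<Sum>(v, u)\<in>AP. D t {u, v} * \<bar>p t v - p t u\<bar>) = S t - SO t"
    using sum_A_split[of "\<lambda>(v, u). D t {u, v} * \<bar>p t v - p t u\<bar>"] unfolding S_def SO_def by simp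
  finally show ?thesis by (simp add: algebra_simps)
qed

lemma I4: assumes t: "t \<ge> 0" shows "T t \<ge> Dl t"
proof -
  have "(\<Sum>i<kk. dp t i) = p t (P0 ! 0) - p t (P0 ! kk)"
    unfolding dp_def by (rule sum_lessThan_telescope')
  then have "Dl t = (\<Sum>i<kk. dp t i)" using P0_facts p_s1[OF t] by (simp add: Dl_def)
  also have "\<dots> \<le> T t" unfolding T_def by (rule sum_mono) simp
  finally show ?thesis .
qed

lemma Dl_telescope: assumes t: "t \<ge> 0" shows "Dl t = (\<Sum>i<kk. dp t i)"
proof -
  have "(\<Sum>i<kk. dp t i) = p t (P0 ! 0) - p t (P0 ! kk)"
    unfolding dp_def by (rule sum_lessThan_telescope')
  then show ?thesis using P0_facts p_s1[OF t] by (simp add: Dl_def)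
qed

lemma cc_fwd: "cc t (P0 ! i) (P0 ! Suc i) = xi t i / Le i"
  by (simp add: cc_def xi_def Le_def ed_def insert_commute)
lemma cc_bwd: "cc t (P0 ! Suc i) (P0 ! i) = xi t i / Le i"
  by (simp add: cc_def xi_def Le_def ed_def insert_commute)

lemma path_energy: assumes t: "t \<ge> 0"
  shows "(\<Sum>i<kk. xi t i / Le i * (dp t i)\<^sup>2) \<le> Dl t"
proof -
  let ?g = "\<lambda>(v, u). cc t v u * (p t v - p t u)\<^sup>2"
  have nn: "\<And>x. x \<in> A \<Longrightarrow> ?g x \<ge> 0" using ccpos[OF _ t] by (auto simp: less_imp_le)
  have "(\<Sum>x\<in>AP. ?g x) = (\<Sum>i<kk. ?g (fwd i)) + (\<Sum>i<kk. ?g (bwd i))" by (rule sum_AP)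
  also have "\<dots> = 2 * (\<Sum>i<kk. xi t i / Le i * (dp t i)\<^sup>2)"
  proof -
    have f1: "\<And>i. ?g (fwd i) = xi t i / Le i * (dp t i)\<^sup>2"
      by (simp add: fwd_def cc_fwd dp_def)
    have f2: "\<And>i. ?g (bwd i) = xi t i / Le i * (dp t i)\<^sup>2"
      by (simp add: bwd_def cc_bwd dp_def power2_commute)
    show ?thesis unfolding f1 f2 by simp
  qed
  moreover have "(\<Sum>x\<in>AO. ?g x) \<ge> 0" using nn by (intro sum_nonneg) (auto simp: AO_def)
  ultimately have "2 * (\<Sum>i<kk. xi t i / Le i * (dp t i)\<^sup>2) \<le> (\<Sum>x\<in>AP. ?g x) + (\<Sum>x\<in>AO. ?g x)"
    by linarith
  also have "\<dots> = 2 * Dl t" using sum_A_split[of ?g] I1[OF t] by simp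
  finally show ?thesis by simp
qed

lemma I5: assumes t: "t \<ge> 0" shows "Dl t \<le> (\<Sum>i<kk. Le i / xi t i)"
proof -
  let ?a = "\<lambda>i. sqrt (Le i / xi t i)" and ?b = "\<lambda>i. sqrt (xi t i / Le i) * dp t i"
  have pos: "\<And>i. i < kk \<Longrightarrow> Le i > 0 \<and> xi t i > 0" using Le_pos xi_pos t by auto
  have "(Dl t)\<^sup>2 = (\<Sum>i<kk. ?a i * ?b i)\<^sup>2"
  proof -
    have "\<And>i. i < kk \<Longrightarrow> ?a i * ?b i = dp t i"
    proof -
      fix i assume "i < kk"
      with pos have "Le i > 0" "xi t i > 0" by auto
      then have "sqrt (Le i / xi t i) * sqrt (xi t i / Le i) = 1"
        by (subst real_sqrt_mult[symmetric]) simp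
      then show "?a i * ?b i = dp t i" by (simp add: mult.assoc[symmetric])
    qed
    then have "(\<Sum>i<kk. ?a i * ?b i) = (\<Sum>i<kk. dp t i)" by (intro sum.cong) auto
    then show ?thesis using Dl_telescope[OF t] by simp
  qed
  also have "\<dots> \<le> (\<Sum>i<kk. (?a i)\<^sup>2) * (\<Sum>i<kk. (?b i)\<^sup>2)" by (rule Cauchy_Schwarz_ineq_sum)
  also have "(\<Sum>i<kk. (?a i)\<^sup>2) = (\<Sum>i<kk. Le i / xi t i)"
    using pos by (intro sum.cong) (auto simp: less_imp_le)
  also have "(\<Sum>i<kk. (?b i)\<^sup>2) = (\<Sum>i<kk. xi t i / Le i * (dp t i)\<^sup>2)"
    using pos by (intro sum.cong) (auto simp: less_imp_le power_mult_distrib)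
  finally have c: "(Dl t)\<^sup>2 \<le> (\<Sum>i<kk. Le i / xi t i) * (\<Sum>i<kk. xi t i / Le i * (dp t i)\<^sup>2)" .
  have R: "(\<Sum>i<kk. Le i / xi t i) \<ge> 0" using pos by (intro sum_nonneg) (simp add: less_imp_le)
  have "(\<Sum>i<kk. Le i / xi t i) * (\<Sum>i<kk. xi t i / Le i * (dp t i)\<^sup>2) \<le> (\<Sum>i<kk. Le i / xi t i) * Dl t"
    by (rule mult_left_mono[OF path_energy[OF t] R])
  with c have c2: "Dl t * Dl t \<le> (\<Sum>i<kk. Le i / xi t i) * Dl t" by (simp add: power2_eq_square)
  show ?thesis
  proof (cases "Dl t > 0")
    case True then show ?thesis by (rule mult_right_le_imp_le[OF c2])
  next
    case False then show ?thesis using R Dl_nn[OF t] by linarith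
  qed
qed

lemma I6: assumes t: "t \<ge> 0" "i < kk" shows "Le i * xi t i \<le> V t"
proof -
  have nn: "\<And>x. x \<in> A - {fwd i} \<Longrightarrow> 0 \<le> (case x of (v, u) \<Rightarrow> L {u, v} * D t {u, v})"
  proof -
    fix x assume x: "x \<in> A - {fwd i}"
    obtain v u where vu0: "x = (v, u)" by (cases x)
    have "{u, v} \<in> E" using x unfolding vu0 by (simp add: memA)
    note vu = vu0 this
    then show "0 \<le> (case x of (v, u) \<Rightarrow> L {u, v} * D t {u, v})"
      using Lpos[OF vu(2)] Dpos[OF vu(2) t(1)] by simp
  qed
  have "(case fwd i of (v, u) \<Rightarrow> L {u, v} * D t {u, v}) \<le> V t"
    unfolding V_def by (rule member_le_sum[OF fwd_A[OF t(2)] nn finA])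
  moreover have "{P0 ! Suc i, P0 ! i} = ed i" unfolding ed_def by (rule insert_commute)
  ultimately show ?thesis unfolding fwd_def Le_def xi_def prod.case by metis
qed

end

context phys begin

lemma Dderiv_A: assumes "(v, u) \<in> A" "t \<ge> 0"
  shows "((\<lambda>\<tau>. D \<tau> {u, v}) has_real_derivative
           (D t {u, v} * \<bar>p t v - p t u\<bar> / L {u, v} - D t {u, v})) (at t within {0..})"
proof -
  have e: "{u, v} \<in> E" using assms by (simp add: memA)
  have "\<bar>D t {u, v} * (p t u - p t v) / L {u, v}\<bar> = D t {u, v} * \<bar>p t v - p t u\<bar> / L {u, v}"
    using Dpos[OF e assms(2)] Lpos[OF e] by (simp add: abs_mult abs_minus_commute)
  then show ?thesis using Dderiv[OF e assms(2)] by simp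
qed

lemma V_deriv: assumes t: "t \<ge> 0"
  shows "(V has_real_derivative (S t - V t)) (at t within {0..})"
proof -
  have "((\<lambda>\<tau>. \<Sum>x\<in>A. (case x of (v, u) \<Rightarrow> L {u, v} * D \<tau> {u, v})) has_real_derivative
      (\<Sum>x\<in>A. (case x of (v, u) \<Rightarrow> D t {u, v} * \<bar>p t v - p t u\<bar> - L {u, v} * D t {u, v}))) (at t within {0..})"
  proof (rule DERIV_sum)
    fix x assume x: "x \<in> A"
    obtain v u where vu: "x = (v, u)" by (cases x)
    have e: "{u, v} \<in> E" using x vu by (simp add: memA)
    have "((\<lambda>\<tau>. L {u, v} * D \<tau> {u, v}) has_real_derivative
        L {u, v} * (D t {u, v} * \<bar>p t v - p t u\<bar> / L {u, v} - D t {u, v})) (at t within {0..})"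
      by (rule DERIV_cmult[OF Dderiv_A[OF x[unfolded vu] t]])
    moreover have "L {u, v} * (D t {u, v} * \<bar>p t v - p t u\<bar> / L {u, v} - D t {u, v})
       = D t {u, v} * \<bar>p t v - p t u\<bar> - L {u, v} * D t {u, v}"
      using Lpos[OF e] by (simp add: field_simps)
    ultimately show "((\<lambda>\<tau>. case x of (v, u) \<Rightarrow> L {u, v} * D \<tau> {u, v}) has_real_derivative
      (case x of (v, u) \<Rightarrow> D t {u, v} * \<bar>p t v - p t u\<bar> - L {u, v} * D t {u, v})) (at t within {0..})"
      unfolding vu by simp
  qed
  moreover have "(\<Sum>x\<in>A. (case x of (v, u) \<Rightarrow> D t {u, v} * \<bar>p t v - p t u\<bar> - L {u, v} * D t {u, v})) = S t - V t"
    unfolding S_def V_def by (simp add: sum_subtractf[symmetric] case_prod_unfold)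
  ultimately show ?thesis unfolding V_def[abs_def] by simp
qed

lemma VO_deriv: assumes t: "t \<ge> 0"
  shows "(VO has_real_derivative (SO t - VO t)) (at t within {0..})"
proof -
  have "((\<lambda>\<tau>. \<Sum>x\<in>AO. (case x of (v, u) \<Rightarrow> L {u, v} * D \<tau> {u, v})) has_real_derivative
      (\<Sum>x\<in>AO. (case x of (v, u) \<Rightarrow> D t {u, v} * \<bar>p t v - p t u\<bar> - L {u, v} * D t {u, v}))) (at t within {0..})"
  proof (rule DERIV_sum)
    fix x assume x: "x \<in> AO"
    obtain v u where vu: "x = (v, u)" by (cases x)
    have xA: "(v, u) \<in> A" using x vu by (simp add: AO_def)
    have e: "{u, v} \<in> E" using xA by (simp add: memA)
    have "((\<lambda>\<tau>. L {u, v} * D \<tau> {u, v}) has_real_derivative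
        L {u, v} * (D t {u, v} * \<bar>p t v - p t u\<bar> / L {u, v} - D t {u, v})) (at t within {0..})"
      by (rule DERIV_cmult[OF Dderiv_A[OF xA t]])
    moreover have "L {u, v} * (D t {u, v} * \<bar>p t v - p t u\<bar> / L {u, v} - D t {u, v})
       = D t {u, v} * \<bar>p t v - p t u\<bar> - L {u, v} * D t {u, v}"
      using Lpos[OF e] by (simp add: field_simps)
    ultimately show "((\<lambda>\<tau>. case x of (v, u) \<Rightarrow> L {u, v} * D \<tau> {u, v}) has_real_derivative
      (case x of (v, u) \<Rightarrow> D t {u, v} * \<bar>p t v - p t u\<bar> - L {u, v} * D t {u, v})) (at t within {0..})"
      unfolding vu by simp
  qed
  moreover have "(\<Sum>x\<in>AO. (case x of (v, u) \<Rightarrow> D t {u, v} * \<bar>p t v - p t u\<bar> - L {u, v} * D t {u, v})) = SO t - VO t"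
    unfolding SO_def VO_def by (simp add: sum_subtractf[symmetric] case_prod_unfold)
  ultimately show ?thesis unfolding VO_def[abs_def] by simp
qed

lemma xi_deriv: assumes t: "t \<ge> 0" and i: "i < kk"
  shows "((\<lambda>\<tau>. xi \<tau> i) has_real_derivative (xi t i * \<bar>dp t i\<bar> / Le i - xi t i)) (at t within {0..})"
proof -
  have e: "{P0 ! i, P0 ! Suc i} \<in> E" using ed_E[OF i] by (simp add: ed_def)
  have "\<bar>D t {P0 ! i, P0 ! Suc i} * (p t (P0 ! i) - p t (P0 ! Suc i)) / L {P0 ! i, P0 ! Suc i}\<bar>
      = xi t i * \<bar>dp t i\<bar> / Le i"
    using Dpos[OF e t] Lpos[OF e] by (simp add: abs_mult xi_def dp_def Le_def ed_def)
  then show ?thesis using Dderiv[OF e t] by (simp add: xi_def ed_def Le_def)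
qed

definition W :: "real \<Rightarrow> real" where "W t = (\<Sum>i<kk. Le i * ln (xi t i))"
definition F :: "real \<Rightarrow> real" where "F t = W t - Lstar * ln (V t)"
definition Fd :: "real \<Rightarrow> real" where "Fd t = T t - Lstar * S t / V t"

lemma V_pos: assumes t: "t \<ge> 0" shows "V t > 0"
proof -
  have "0 < kk" using kk_pos by simp
  then have "Le 0 * xi t 0 > 0" using Le_pos xi_pos t by simp
  then show ?thesis using I6[OF t \<open>0 < kk\<close>] by simp
qed

lemma W_deriv: assumes t: "t \<ge> 0"
  shows "(W has_real_derivative (T t - Lstar)) (at t within {0..})"
proof -
  have "((\<lambda>\<tau>. \<Sum>i<kk. Le i * ln (xi \<tau> i)) has_real_derivative (\<Sum>i<kk. \<bar>dp t i\<bar> - Le i)) (at t within {0..})"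
  proof (rule DERIV_sum)
    fix i assume "i \<in> {..<kk}"
    then have i: "i < kk" by simp
    have pos: "xi t i > 0" "Le i > 0" using xi_pos[OF t i] Le_pos[OF i] by auto
    have "((\<lambda>\<tau>. Le i * ln (xi \<tau> i)) has_real_derivative
        Le i * (1 / xi t i * (xi t i * \<bar>dp t i\<bar> / Le i - xi t i))) (at t within {0..})"
      by (rule DERIV_cmult DERIV_ln_divide[unfolded divide_inverse] xi_deriv[OF t i] pos |
          rule derivative_eq_intros)+ (use pos in simp)
    moreover have "Le i * (1 / xi t i * (xi t i * \<bar>dp t i\<bar> / Le i - xi t i)) = \<bar>dp t i\<bar> - Le i"
      using pos by (simp add: field_simps)
    ultimately show "((\<lambda>\<tau>. Le i * ln (xi \<tau> i)) has_real_derivative (\<bar>dp t i\<bar> - Le i)) (at t within {0..})"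
      by simp
  qed
  then show ?thesis unfolding W_def[abs_def] T_def Lstar_sum by (simp add: sum_subtractf)
qed

lemma F_deriv: assumes t: "t \<ge> 0"
  shows "(F has_real_derivative Fd t) (at t within {0..})"
proof -
  have Vp: "V t > 0" by (rule V_pos[OF t])
  have "((\<lambda>\<tau>. W \<tau> - Lstar * ln (V \<tau>)) has_real_derivative
      ((T t - Lstar) - Lstar * (1 / V t * (S t - V t)))) (at t within {0..})"
    by (rule derivative_eq_intros W_deriv[OF t] V_deriv[OF t] refl | use Vp in simp)+
  moreover have "(T t - Lstar) - Lstar * (1 / V t * (S t - V t)) = Fd t"
    using Vp by (simp add: Fd_def field_simps)
  ultimately show ?thesis unfolding F_def[abs_def] by simp
qed

lemma Fd_ge: assumes t: "t \<ge> 0" shows "Fd t \<ge> Lstar * eps * SO t / V t"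
proof -
  have Vp: "V t > 0" by (rule V_pos[OF t])
  have i3: "S t \<ge> 2 * Lstar + eps * SO t" by (rule I3[OF t])
  have so: "SO t \<ge> 0" by (rule SO_nn[OF t])
  have "eps * SO t \<ge> 0" using so eps_pos by simp
  have "T t \<ge> (S t)\<^sup>2 / (2 * V t)"
  proof -
    have "Dl t * V t \<le> T t * V t" using I4[OF t] Vp by (simp add: mult_right_mono)
    then have a: "(S t)\<^sup>2 \<le> 2 * (T t * V t)" using I2[OF t] by (simp add: algebra_simps)
    then show ?thesis using Vp by (simp add: field_simps)
  qed
  then have "Fd t \<ge> ((S t)\<^sup>2 - 2 * Lstar * S t) / (2 * V t)"
    unfolding Fd_def using Vp by (simp add: field_simps)
  moreover have "(S t)\<^sup>2 - 2 * Lstar * S t \<ge> 2 * Lstar * (eps * SO t)"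
  proof -
    have "S t * (S t - 2 * Lstar) \<ge> (2 * Lstar) * (eps * SO t)"
      using i3 Lstar_pos \<open>eps * SO t \<ge> 0\<close>
      by (intro mult_mono) auto
    then show ?thesis by (simp add: power2_eq_square algebra_simps)
  qed
  ultimately have "Fd t \<ge> 2 * Lstar * (eps * SO t) / (2 * V t)"
    using Vp by (smt (verit) divide_right_mono)
  then show ?thesis by simp
qed

lemma Fd_nn: "t \<ge> 0 \<Longrightarrow> Fd t \<ge> 0"
  using Fd_ge[of t] SO_nn[of t] V_pos[of t] Lstar_pos eps_pos
  by (smt (verit) divide_nonneg_pos mult_nonneg_nonneg)

end

lemma mul_exp_min: fixes c e :: real assumes "0 < e" "e \<le> 1" shows "c * e \<ge> min 0 c" "c * e \<le> max 0 c"
proof -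
  show "c * e \<ge> min 0 c"
  proof (cases "c \<ge> 0")
    case True then show ?thesis using assms by simp
  next
    case False then have "c * e \<ge> c * 1" using assms by (intro mult_left_mono_neg) auto
    then show ?thesis by simp
  qed
  show "c * e \<le> max 0 c"
  proof (cases "c \<ge> 0")
    case True then have "c * e \<le> c * 1" using assms by (intro mult_left_mono) auto
    then show ?thesis by simp
  next
    case False then show ?thesis using assms by (simp add: mult_nonpos_nonneg)
  qed
qed

context phys begin

lemma F_mono: assumes "0 \<le> s" "s \<le> t" shows "F s \<le> F t"
  by (rule deriv_mono_within[OF assms F_deriv Fd_nn]) (use assms in auto)

definition Vlo where "Vlo = min (V 0) (2 * Lstar)"

lemma Vlo_pos: "Vlo > 0" using V_pos[of 0] Lstar_pos by (simp add: Vlo_def)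

lemma V_lo: assumes t: "t \<ge> 0" shows "V t \<ge> Vlo"
proof -
  have "V t \<ge> 2 * Lstar + (V 0 - 2 * Lstar) * exp (- (t - 0))"
  proof (rule cmp_lower[where f = V])
    fix s :: real assume s: "s \<ge> 0"
    show "(V has_real_derivative (S s - V s)) (at s within {0..})" by (rule V_deriv[OF s])
    have "eps * SO s \<ge> 0" using SO_nn[OF s] eps_pos by simp
    then show "S s - V s \<ge> 2 * Lstar - V s" using I3[OF s] by linarith
  qed (use t in auto)
  moreover have "exp (-t) \<le> 1" "exp (-t) > 0" using t by auto
  ultimately have "V t \<ge> 2 * Lstar + min 0 (V 0 - 2 * Lstar)"
    using mul_exp_min(1)[of "exp (-t)" "V 0 - 2 * Lstar"] by simp
  then show ?thesis unfolding Vlo_def by linarith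
qed

definition Cc where "Cc = - (F 0 + (\<Sum>i<kk. Le i * ln (Le i)))"

lemma path_lower: assumes t: "t \<ge> 0" and i: "i < kk"
  shows "Le i * (ln (xi t i) - ln (V t) + ln (Le i)) \<ge> - Cc"
proof -
  have Vp: "V t > 0" by (rule V_pos[OF t])
  let ?a = "\<lambda>j. Le j * (ln (xi t j) - ln (V t) + ln (Le j))"
  have aneg: "\<And>j. j < kk \<Longrightarrow> ?a j \<le> 0"
  proof -
    fix j assume j: "j < kk"
    have "Le j * xi t j \<le> V t" by (rule I6[OF t j])
    moreover have "0 < Le j * xi t j" using Le_pos[OF j] xi_pos[OF t j] by simp
    ultimately have "ln (Le j * xi t j) \<le> ln (V t)" by simp
    then have "ln (xi t j) - ln (V t) + ln (Le j) \<le> 0" using Le_pos[OF j] xi_pos[OF t j]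
      by (simp add: ln_mult)
    then show "?a j \<le> 0" using Le_pos[OF j] by (simp add: mult_nonneg_nonpos less_imp_le)
  qed
  have "(\<Sum>j<kk. ?a j) = F t + (\<Sum>j<kk. Le j * ln (Le j))"
    unfolding F_def W_def Lstar_sum
    by (simp add: algebra_simps sum.distrib sum_distrib_left sum_distrib_right sum_subtractf)
  also have "\<dots> \<ge> - Cc" using F_mono[OF _ t] by (simp add: Cc_def)
  finally have s: "(\<Sum>j<kk. ?a j) \<ge> - Cc" .
  have "(\<Sum>j<kk. ?a j) = ?a i + (\<Sum>j\<in>{..<kk} - {i}. ?a j)"
    using i by (subst sum.remove[of _ i]) auto
  moreover have "(\<Sum>j\<in>{..<kk} - {i}. ?a j) \<le> 0" using aneg by (intro sum_nonpos) auto
  ultimately show ?thesis using s by linarith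
qed

definition R0 where "R0 = (\<Sum>i<kk. (Le i)\<^sup>2 * exp (Cc / Le i))"

lemma Le_xi_bound: assumes t: "t \<ge> 0" and i: "i < kk"
  shows "Le i / xi t i \<le> (Le i)\<^sup>2 * exp (Cc / Le i) / V t"
proof -
  have Vp: "V t > 0" and l: "Le i > 0" and x: "xi t i > 0"
    using V_pos[OF t] Le_pos[OF i] xi_pos[OF t i] by auto
  have "ln (xi t i) - ln (V t) + ln (Le i) \<ge> - Cc / Le i"
    using path_lower[OF t i] l by (simp add: field_simps)
  then have "ln (xi t i * Le i / V t) \<ge> - Cc / Le i" using Vp l x by (simp add: ln_mult ln_div)
  then have "xi t i * Le i / V t \<ge> exp (- Cc / Le i)"
    using Vp l x by (metis exp_le_cancel_iff exp_ln divide_pos_pos mult_pos_pos)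
  then have "xi t i * Le i \<ge> V t * exp (- Cc / Le i)" using Vp by (simp add: field_simps)
  then have "Le i / xi t i \<le> Le i / (V t * exp (- Cc / Le i) / Le i)"
    using Vp l x by (intro divide_left_mono) (auto simp: field_simps)
  also have "\<dots> = (Le i)\<^sup>2 * exp (Cc / Le i) / V t"
    using Vp l by (simp add: field_simps power2_eq_square exp_minus)
  finally show ?thesis .
qed

lemma Dl_bound: assumes t: "t \<ge> 0" shows "Dl t \<le> R0 / V t"
proof -
  have "Dl t \<le> (\<Sum>i<kk. Le i / xi t i)" by (rule I5[OF t])
  also have "\<dots> \<le> (\<Sum>i<kk. (Le i)\<^sup>2 * exp (Cc / Le i) / V t)"
    by (rule sum_mono) (use Le_xi_bound[OF t] in auto)
  also have "\<dots> = R0 / V t" by (simp add: R0_def sum_divide_distrib)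
  finally show ?thesis .
qed

lemma S_bound: assumes t: "t \<ge> 0" shows "S t \<le> sqrt (2 * R0)"
proof -
  have Vp: "V t > 0" by (rule V_pos[OF t])
  have "(S t)\<^sup>2 \<le> 2 * V t * Dl t" by (rule I2[OF t])
  also have "\<dots> \<le> 2 * V t * (R0 / V t)" using Dl_bound[OF t] Vp by (intro mult_left_mono) auto
  also have "\<dots> = 2 * R0" using Vp by simp
  finally show ?thesis using S_nn[OF t] by (simp add: real_le_rsqrt)
qed

definition Vhi where "Vhi = max (V 0) (sqrt (2 * R0))"

lemma V_hi: assumes t: "t \<ge> 0" shows "V t \<le> Vhi"
proof -
  have "V t \<le> sqrt (2 * R0) + (V 0 - sqrt (2 * R0)) * exp (- (t - 0))"
  proof (rule cmp_upper[where f = V])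
    fix s :: real assume s: "s \<ge> 0"
    show "(V has_real_derivative (S s - V s)) (at s within {0..})" by (rule V_deriv[OF s])
    show "S s - V s \<le> sqrt (2 * R0) - V s" using S_bound[OF s] by simp
  qed (use t in auto)
  moreover have "exp (-t) \<le> 1" "exp (-t) > 0" using t by auto
  ultimately have "V t \<le> sqrt (2 * R0) + max 0 (V 0 - sqrt (2 * R0))"
    using mul_exp_min(2)[of "exp (-t)" "V 0 - sqrt (2 * R0)"] by simp
  then show ?thesis unfolding Vhi_def by linarith
qed

definition Dmax where "Dmax = R0 / Vlo"

lemma Dl_max: assumes t: "t \<ge> 0" shows "Dl t \<le> Dmax"
proof -
  have R0: "R0 \<ge> 0" unfolding R0_def by (intro sum_nonneg) auto
  have "R0 / V t \<le> R0 / Vlo" using V_lo[OF t] Vlo_pos R0 by (intro divide_left_mono) auto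
  then show ?thesis using Dl_bound[OF t] by (simp add: Dmax_def)
qed

lemma F_up: assumes t: "t \<ge> 0" shows "F t \<le> - (\<Sum>i<kk. Le i * ln (Le i))"
proof -
  have "W t \<le> (\<Sum>i<kk. Le i * (ln (V t) - ln (Le i)))"
    unfolding W_def
  proof (rule sum_mono)
    fix i assume "i \<in> {..<kk}" then have i: "i < kk" by simp
    have "Le i * xi t i \<le> V t" by (rule I6[OF t i])
    moreover have "0 < Le i * xi t i" using Le_pos[OF i] xi_pos[OF t i] by simp
    ultimately have "ln (Le i * xi t i) \<le> ln (V t)" by simp
    then have "ln (xi t i) \<le> ln (V t) - ln (Le i)" using Le_pos[OF i] xi_pos[OF t i]
      by (simp add: ln_mult)
    then show "Le i * ln (xi t i) \<le> Le i * (ln (V t) - ln (Le i))"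
      using Le_pos[OF i] by (simp add: mult_left_mono)
  qed
  then show ?thesis unfolding F_def Lstar_sum
    by (simp add: algebra_simps sum_subtractf sum_distrib_right)
qed

end

lemma deriv_mono_within2:
  fixes h h' :: "real \<Rightarrow> real"
  assumes "0 \<le> T" "T \<le> t"
    and d: "\<And>s. s \<ge> T \<Longrightarrow> (h has_real_derivative h' s) (at s within {0..})"
    and nn: "\<And>s. s \<ge> T \<Longrightarrow> s \<le> t \<Longrightarrow> h' s \<ge> 0"
  shows "h T \<le> h t"
proof (rule DERIV_nonneg_imp_increasing_open[OF assms(2)])
  fix x assume x: "T < x" "x < t"
  have sub: "{0<..} \<subseteq> {0::real..}" by auto
  have "(h has_real_derivative h' x) (at x within {0<..})"
    using has_field_derivative_subset[OF d[of x] sub] x by simp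
  then have "(h has_real_derivative h' x) (at x)"
    using x assms(1) at_within_open[of x "{0<..}"] by simp
  then show "\<exists>y. (h has_real_derivative y) (at x) \<and> 0 \<le> y" using nn[of x] x by auto
next
  have "continuous_on {T..t} h"
    unfolding continuous_on_eq_continuous_within
  proof
    fix x :: real assume x: "x \<in> {T..t}"
    have "continuous (at x within {0..}) h"
      using DERIV_continuous[OF d[of x]] x by simp
    then show "continuous (at x within {T..t}) h"
      by (rule continuous_within_subset) (use assms(1) in auto)
  qed
  then show "continuous_on {T..t} h" .
qed

context phys begin

definition KK where "KK = Vhi / (Lstar * eps)"
definition G where "G t = VO t - KK * F t"
definition Fupc where "Fupc = - (\<Sum>i<kk. Le i * ln (Le i))"

lemma Vhi_pos: "Vhi > 0" using V_hi[of 0] V_pos[of 0] by simp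

lemma KK_pos: "KK > 0" using Vhi_pos Lstar_pos eps_pos by (simp add: KK_def)

lemma SO_le: assumes t: "t \<ge> 0" shows "SO t \<le> KK * Fd t"
proof -
  have Vp: "V t > 0" using V_pos[OF t] .
  have c: "Lstar * eps > 0" using Lstar_pos eps_pos by simp
  have "Lstar * eps * SO t / Vhi \<le> Lstar * eps * SO t / V t"
    using V_hi[OF t] Vp c SO_nn[OF t] by (intro divide_left_mono) auto
  also have "\<dots> \<le> Fd t" by (rule Fd_ge[OF t])
  finally have "Lstar * eps * SO t / Vhi \<le> Fd t" .
  then have "Lstar * eps * SO t \<le> Vhi * Fd t" using Vhi_pos by (simp add: field_simps)
  then have "SO t \<le> Vhi * Fd t / (Lstar * eps)" using c by (simp add: field_simps)
  then show ?thesis by (simp add: KK_def)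
qed

lemma G_deriv: assumes t: "t \<ge> 0"
  shows "(G has_real_derivative (SO t - VO t - KK * Fd t)) (at t within {0..})"
  unfolding G_def[abs_def]
  by (rule derivative_eq_intros VO_deriv[OF t] F_deriv[OF t] refl | simp)+

lemma G_mono: assumes "0 \<le> s" "s \<le> t" shows "G t \<le> G s"
proof -
  have "- G s \<le> - G t"
  proof (rule deriv_mono_within[OF assms])
    fix r :: real assume r: "r \<ge> s"
    then have r0: "r \<ge> 0" using assms by simp
    show "((\<lambda>x. - G x) has_real_derivative - (SO r - VO r - KK * Fd r)) (at r within {0..})"
      by (rule DERIV_minus[OF G_deriv[OF r0]])
    show "- (SO r - VO r - KK * Fd r) \<ge> 0" using SO_le[OF r0] VO_nn[OF r0] by simp
  qed
  then show ?thesis by simp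
qed

lemma G_lo: assumes t: "t \<ge> 0" shows "G t \<ge> - KK * Fupc"
proof -
  have "KK * F t \<le> KK * Fupc" using F_up[OF t] KK_pos unfolding Fupc_def by (intro mult_left_mono) auto
  then show ?thesis using VO_nn[OF t] by (simp add: G_def)
qed

lemma VO_lower: assumes t: "t \<ge> 0" and s: "t \<le> s"
  shows "VO s \<ge> VO t * exp (- (s - t))"
proof -
  have "VO s \<ge> 0 + (VO t - 0) * exp (- (s - t))"
  proof (rule cmp_lower[OF t s])
    fix r :: real assume r: "r \<ge> t"
    then have r0: "r \<ge> 0" using t by simp
    show "(VO has_real_derivative (SO r - VO r)) (at r within {0..})" by (rule VO_deriv[OF r0])
    show "SO r - VO r \<ge> 0 - VO r" using SO_nn[OF r0] by simp
  qed
  then show ?thesis by simp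
qed

lemma VO_G: assumes t: "t \<ge> 0" shows "VO t * exp (-1) \<le> G t - G (t + 1)"
proof -
  let ?c = "VO t * exp (-1)"
  have "(\<lambda>s. - (G s + (s - t) * ?c)) t \<le> (\<lambda>s. - (G s + (s - t) * ?c)) (t + 1)"
  proof (rule deriv_mono_within2[OF t])
    fix s :: real assume s: "s \<ge> t"
    then have s0: "s \<ge> 0" using t by simp
    show "((\<lambda>s. - (G s + (s - t) * ?c)) has_real_derivative
        - ((SO s - VO s - KK * Fd s) + 1 * ?c)) (at s within {0..})"
      by (rule derivative_eq_intros G_deriv[OF s0] refl | simp)+
    assume s1: "s \<le> t + 1"
    have "VO s \<ge> VO t * exp (- (s - t))" by (rule VO_lower[OF t s])
    moreover have "exp (- (s - t)) \<ge> exp (-1)" using s1 by simp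
    moreover have "VO t \<ge> 0" by (rule VO_nn[OF t])
    ultimately have "VO s \<ge> ?c" by (smt (verit) mult_left_mono)
    then show "- ((SO s - VO s - KK * Fd s) + 1 * ?c) \<ge> 0" using SO_le[OF s0] by simp
  qed simp
  then show ?thesis by simp
qed

lemma VO_lim: "(VO \<longlongrightarrow> 0) at_top"
proof (rule tendstoI)
  fix e :: real assume e: "e > 0"
  obtain T0 where T0: "T0 \<ge> 0" "\<And>t. t \<ge> T0 \<Longrightarrow> G t - G (t + 1) < e * exp (-1)"
    using mono_bdd_diff[of G "- KK * Fupc" "e * exp (-1)"] G_mono G_lo e by auto
  have "\<forall>\<^sub>F t in at_top. t \<ge> T0" by (rule eventually_ge_at_top)
  then show "\<forall>\<^sub>F t in at_top. dist (VO t) 0 < e"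
  proof eventually_elim
    case (elim t)
    then have t: "t \<ge> 0" using T0 by simp
    have "VO t * exp (-1) < e * exp (-1)" using VO_G[OF t] T0(2)[OF elim] by linarith
    then have "VO t < e" by (simp add: mult_less_cancel_right)
    then show ?case using VO_nn[OF t] by simp
  qed
qed

end

context phys begin

definition qA :: "real \<Rightarrow> 'a \<Rightarrow> 'a \<Rightarrow> real" where "qA t v u = cc t v u * (p t v - p t u)"

lemma Dmax_nn: "Dmax \<ge> 0" using Dl_max[of 0] Dl_nn[of 0] by simp

lemma qA_bound: assumes x: "(v, u) \<in> AO" and t: "t \<ge> 0"
  shows "\<bar>qA t v u\<bar> \<le> sqrt (2 * Dmax * VO t) / L {u, v}"
proof -
  have xA: "(v, u) \<in> A" using x by (simp add: AO_def)
  have e: "{u, v} \<in> E" using xA by (simp add: memA)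
  have Lp: "L {u, v} > 0" and Dp: "D t {u, v} > 0" using Lpos[OF e] Dpos[OF e t] by auto
  have c: "cc t v u > 0" by (rule ccpos[OF xA t])
  let ?g = "\<lambda>(v, u). cc t v u * (p t v - p t u)\<^sup>2"
  have "?g (v, u) \<le> (\<Sum>x\<in>A. ?g x)"
    by (rule member_le_sum[OF xA _ finA]) (use ccpos[OF _ t] in \<open>auto simp: less_imp_le\<close>)
  then have g: "cc t v u * (p t v - p t u)\<^sup>2 \<le> 2 * Dmax" using I1[OF t] Dl_max[OF t] by simp
  have "(case (v, u) of (v, u) \<Rightarrow> L {u, v} * D t {u, v}) \<le> (\<Sum>x\<in>AO. case x of (v, u) \<Rightarrow> L {u, v} * D t {u, v})"
  proof (rule member_le_sum[OF x _ finAO])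
    fix y assume y: "y \<in> AO - {(v, u)}"
    obtain a b where ab: "y = (a, b)" by (cases y)
    have "{b, a} \<in> E" using y ab by (simp add: AO_def memA)
    then show "0 \<le> (case y of (v, u) \<Rightarrow> L {u, v} * D t {u, v})"
      using Lpos Dpos[OF _ t] ab by (simp add: less_imp_le)
  qed
  then have "(L {u, v} * D t {u, v}) \<le> VO t" by (simp add: VO_def)
  then have dd: "D t {u, v} \<le> VO t / L {u, v}" using Lp by (simp add: field_simps)
  have "(qA t v u)\<^sup>2 = cc t v u * (cc t v u * (p t v - p t u)\<^sup>2)"
    by (simp add: qA_def power2_eq_square)
  also have "\<dots> \<le> cc t v u * (2 * Dmax)" using g c by (intro mult_left_mono) auto
  also have "\<dots> \<le> (VO t / L {u, v} / L {u, v}) * (2 * Dmax)"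
  proof (rule mult_right_mono)
    show "cc t v u \<le> VO t / L {u, v} / L {u, v}"
      unfolding cc_def using divide_right_mono[OF dd less_imp_le[OF Lp]] by simp
  qed (use Dmax_nn in simp)
  also have "\<dots> = (sqrt (2 * Dmax * VO t) / L {u, v})\<^sup>2"
    using Lp Dmax_nn VO_nn[OF t] by (simp add: power2_eq_square power_divide field_simps)
  finally have sq: "(qA t v u)\<^sup>2 \<le> (sqrt (2 * Dmax * VO t) / L {u, v})\<^sup>2" .
  have B0: "0 \<le> sqrt (2 * Dmax * VO t) / L {u, v}" using Lp Dmax_nn VO_nn[OF t] by simp
  show ?thesis using power2_le_imp_le[of "\<bar>qA t v u\<bar>", OF _ B0] sq by simp
qed

lemma qA_lim: assumes x: "(v, u) \<in> AO" shows "((\<lambda>t. qA t v u) \<longlongrightarrow> 0) at_top"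
proof -
  have e: "{u, v} \<in> E" using x by (simp add: AO_def memA)
  have "((\<lambda>t. sqrt (2 * Dmax * VO t) / L {u, v}) \<longlongrightarrow> sqrt (2 * Dmax * 0) / L {u, v}) at_top"
    by (intro tendsto_intros VO_lim) (use Lpos[OF e] in simp)
  then have lim: "((\<lambda>t. sqrt (2 * Dmax * VO t) / L {u, v}) \<longlongrightarrow> 0) at_top" by simp
  have "((\<lambda>t. \<bar>qA t v u\<bar>) \<longlongrightarrow> 0) at_top"
  proof (rule tendsto_sandwich[OF _ _ tendsto_const lim])
    show "\<forall>\<^sub>F t in at_top. 0 \<le> \<bar>qA t v u\<bar>" by simp
    show "\<forall>\<^sub>F t in at_top. \<bar>qA t v u\<bar> \<le> sqrt (2 * Dmax * VO t) / L {u, v}"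
      using eventually_ge_at_top[of 0] by eventually_elim (rule qA_bound[OF x])
  qed
  then show ?thesis by (simp add: tendsto_rabs_zero_iff)
qed

definition qq :: "real \<Rightarrow> nat \<Rightarrow> real" where "qq t i = xi t i / Le i * dp t i"

lemma cut: assumes t: "t \<ge> 0" and i: "i < kk"
  shows "\<bar>2 - 2 * qq t i\<bar> \<le> (\<Sum>(v, u)\<in>AO. \<bar>qA t v u\<bar>)"
proof -
  define \<phi> :: "'a \<Rightarrow> real" where "\<phi> v = (if \<exists>j\<le>i. v = P0 ! j then 1 else 0)" for v
  have phij: "\<And>j. j \<le> kk \<Longrightarrow> \<phi> (P0 ! j) = (if j \<le> i then 1 else 0)"
  proof -
    fix j assume j: "j \<le> kk"
    have "(\<exists>j'\<le>i. P0 ! j = P0 ! j') \<longleftrightarrow> j \<le> i"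
      using nth_P0_inj[OF j] i by (auto, metis le_trans less_imp_le_nat)
    then show "\<phi> (P0 ! j) = (if j \<le> i then 1 else 0)" by (simp add: \<phi>_def)
  qed
  have s0: "\<phi> s0 = 1" using phij[of 0] P0_facts by simp
  have s1: "\<phi> s1 = 0" using phij[of kk] P0_facts i by simp
  let ?h = "\<lambda>(v, u). (\<phi> v - \<phi> u) * cc t v u * (p t v - p t u)"
  have tot: "(\<Sum>x\<in>A. ?h x) = 2" using E1'[OF t, of \<phi>] s0 s1 by simp
  have ap: "(\<Sum>x\<in>AP. ?h x) = 2 * qq t i"
  proof -
    have f: "\<And>j. j < kk \<Longrightarrow> ?h (fwd j) = (if j = i then qq t i else 0)"
      using phij by (auto simp: fwd_def cc_fwd qq_def dp_def)
    have b: "\<And>j. j < kk \<Longrightarrow> ?h (bwd j) = (if j = i then qq t i else 0)"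
      using phij by (auto simp: bwd_def cc_bwd qq_def dp_def algebra_simps)
    have "(\<Sum>j<kk. ?h (fwd j)) = (\<Sum>j<kk. if j = i then qq t i else 0)" using f by (rule sum.cong[OF refl]) simp
    moreover have "(\<Sum>j<kk. ?h (bwd j)) = (\<Sum>j<kk. if j = i then qq t i else 0)" using b by (rule sum.cong[OF refl]) simp
    ultimately show ?thesis using sum_AP[of ?h] i by simp
  qed
  have ao: "\<bar>\<Sum>x\<in>AO. ?h x\<bar> \<le> (\<Sum>(v, u)\<in>AO. \<bar>qA t v u\<bar>)"
  proof -
    have "\<bar>\<Sum>x\<in>AO. ?h x\<bar> \<le> (\<Sum>x\<in>AO. \<bar>?h x\<bar>)" by (rule sum_abs)
    also have "\<dots> \<le> (\<Sum>(v, u)\<in>AO. \<bar>qA t v u\<bar>)"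
    proof (rule sum_mono)
      fix x assume "x \<in> AO"
      obtain v u where vu: "x = (v, u)" by (cases x)
      have "\<bar>\<phi> v - \<phi> u\<bar> \<le> 1" by (simp add: \<phi>_def)
      then have "\<bar>\<phi> v - \<phi> u\<bar> * \<bar>qA t v u\<bar> \<le> 1 * \<bar>qA t v u\<bar>" by (intro mult_right_mono) auto
      then show "\<bar>?h x\<bar> \<le> (case x of (v, u) \<Rightarrow> \<bar>qA t v u\<bar>)"
        unfolding vu by (simp add: qA_def abs_mult mult.assoc)
    qed
    finally show ?thesis .
  qed
  have "(\<Sum>x\<in>A. ?h x) = (\<Sum>x\<in>AP. ?h x) + (\<Sum>x\<in>AO. ?h x)" by (rule sum_A_split)
  then show ?thesis using tot ap ao by simp
qed

lemma qq_lim: assumes i: "i < kk" shows "((\<lambda>t. qq t i) \<longlongrightarrow> 1) at_top"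
proof -
  have "((\<lambda>t. (\<Sum>(v, u)\<in>AO. \<bar>qA t v u\<bar>)) \<longlongrightarrow> (\<Sum>(v, u)\<in>AO. \<bar>0::real\<bar>)) at_top"
    unfolding case_prod_unfold
    by (intro tendsto_sum tendsto_rabs) (use qA_lim in \<open>auto simp: case_prod_unfold\<close>)
  then have lim: "((\<lambda>t. (\<Sum>(v, u)\<in>AO. \<bar>qA t v u\<bar>)) \<longlongrightarrow> 0) at_top" by simp
  have "((\<lambda>t. \<bar>2 - 2 * qq t i\<bar>) \<longlongrightarrow> 0) at_top"
  proof (rule tendsto_sandwich[OF _ _ tendsto_const lim])
    show "\<forall>\<^sub>F t in at_top. 0 \<le> \<bar>2 - 2 * qq t i\<bar>" by simp
    show "\<forall>\<^sub>F t in at_top. \<bar>2 - 2 * qq t i\<bar> \<le> (\<Sum>(v, u)\<in>AO. \<bar>qA t v u\<bar>)"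
      using eventually_ge_at_top[of 0] by eventually_elim (rule cut[OF _ i])
  qed
  then have "((\<lambda>t. 2 - 2 * qq t i) \<longlongrightarrow> 0) at_top" by (simp add: tendsto_rabs_zero_iff)
  then have "((\<lambda>t. 1 - (1/2) * (2 - 2 * qq t i)) \<longlongrightarrow> 1 - (1/2) * 0) at_top"
    by (intro tendsto_intros)
  moreover have "(\<lambda>t. 1 - (1/2) * (2 - 2 * qq t i)) = (\<lambda>t. qq t i)" by (rule ext) (simp add: field_simps)
  ultimately show ?thesis by simp
qed

lemma xi_lim: assumes i: "i < kk" shows "((\<lambda>t. xi t i) \<longlongrightarrow> 1) at_top"
proof (rule ode_limit)
  fix s :: real assume s: "s \<ge> 0"
  show "((\<lambda>t. xi t i) has_real_derivative (xi s i * \<bar>dp s i\<bar> / Le i - xi s i)) (at s within {0..})"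
    by (rule xi_deriv[OF s i])
next
  have "((\<lambda>t. \<bar>qq t i\<bar>) \<longlongrightarrow> \<bar>1\<bar>) at_top" by (intro tendsto_intros qq_lim[OF i])
  moreover have "\<forall>\<^sub>F t in at_top. \<bar>qq t i\<bar> = xi t i * \<bar>dp t i\<bar> / Le i"
    using eventually_ge_at_top[of 0]
  proof eventually_elim
    case (elim t) then show ?case
      using xi_pos[OF elim i] Le_pos[OF i] by (simp add: qq_def abs_mult)
  qed
  ultimately show "((\<lambda>t. xi t i * \<bar>dp t i\<bar> / Le i) \<longlongrightarrow> 1) at_top"
    by (simp add: tendsto_cong)
qed

lemma dp_lim: assumes i: "i < kk" shows "((\<lambda>t. dp t i) \<longlongrightarrow> Le i) at_top"
proof -
  have "((\<lambda>t. Le i * qq t i / xi t i) \<longlongrightarrow> Le i * 1 / 1) at_top"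
    by (intro tendsto_intros qq_lim[OF i] xi_lim[OF i]) simp
  moreover have "\<forall>\<^sub>F t in at_top. Le i * qq t i / xi t i = dp t i"
    using eventually_ge_at_top[of 0]
  proof eventually_elim
    case (elim t) then show ?case
      using xi_pos[OF elim i] Le_pos[OF i] by (simp add: qq_def)
  qed
  ultimately show ?thesis by (simp add: tendsto_cong)
qed

lemma p_telescope: assumes t: "t \<ge> 0" and j: "j \<le> kk"
  shows "p t (P0 ! j) = (\<Sum>i\<in>{j..<kk}. dp t i)"
proof -
  have "(\<Sum>i\<in>{j..<kk}. dp t i) = - (\<Sum>i = j..<kk. p t (P0 ! Suc i) - p t (P0 ! i))"
    unfolding dp_def by (simp add: sum_negf[symmetric])
  also have "\<dots> = p t (P0 ! j) - p t (P0 ! kk)" using sum_Suc_diff'[OF j, of "\<lambda>i. p t (P0 ! i)"] by simp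
  finally show ?thesis using P0_facts p_s1[OF t] by simp
qed

lemma main: assumes v: "v \<in> set P0" shows "((\<lambda>t. p t v) \<longlongrightarrow> dist_L E L v s1) at_top"
proof -
  obtain j where j: "j < length P0" "v = P0 ! j" using v by (auto simp: in_set_conv_nth)
  then have jk: "j \<le> kk" using P0_facts by simp
  have "((\<lambda>t. \<Sum>i\<in>{j..<kk}. dp t i) \<longlongrightarrow> (\<Sum>i\<in>{j..<kk}. Le i)) at_top"
    by (intro tendsto_sum dp_lim) auto
  moreover have "\<forall>\<^sub>F t in at_top. (\<Sum>i\<in>{j..<kk}. dp t i) = p t v"
    using eventually_ge_at_top[of 0] by eventually_elim (simp add: p_telescope jk j)
  ultimately show ?thesis using dist_P0[OF jk] j by (simp add: tendsto_cong)
qed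

end

theorem mainTheorem8:
  fixes N :: "'a set" and E :: "'a set set" and L :: "'a set \<Rightarrow> real"
    and s0 s1 :: 'a and P0 :: "'a list"
    and D :: "real \<Rightarrow> 'a set \<Rightarrow> real" and p :: "real \<Rightarrow> 'a \<Rightarrow> real"
  assumes "simple_graph N E" and "connected_graph N E"
    and "s0 \<in> N" and "s1 \<in> N" and "s0 \<noteq> s1"
    and "\<forall>e\<in>E. L e > 0"
    and "shortest_path E L s0 s1 P0"
    and "\<forall>P. shortest_path E L s0 s1 P \<longrightarrow> P = P0"
    and "physarum_traj N E L s0 s1 D p"
  shows "\<forall>v\<in>set P0. ((\<lambda>t. p t v) \<longlongrightarrow> dist_L E L v s1) at_top"
proof -
  interpret phys N E L s0 s1 P0 D p
    by (rule phys.intro[OF assms(1) assms(3-9)])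
  show ?thesis using main by blast
qed

end
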